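(* Let $T\in B(\mathcal{F})$ be a block-diagonal operator such that $[T,R_i^*]\in\mathcal{S}$ for $1\le i\le d$. Then $T\in\mathcal{C}=C^*(L_1,\ldots,L_d)$.
   Context: $d\ge2$; $\xi_1,\ldots,\xi_d$ is the standard orthonormal basis of $\mathbb{C}^d$. $\mathcal{F}=\bigoplus_{n\ge0}\mathcal{F}_n$ is the full Fock space, $\mathcal{F}_0=\mathbb{C}\Omega$, $\mathcal{F}_n=(\mathbb{C}^d)^{\otimes n}$ with the usual inner product. $L_j\eta=\xi_j\otimes\eta$, $R_j\eta=\eta\otimes\xi_j$ (with $L_j\Omega=R_j\Omega=\xi_j$). $T$ is block-diagonal if $T(\mathcal{F}_n)\subseteq\mathcal{F}_n$ for all $n$. $\mathcal{S}$ is the set of operators $S\in B(\mathcal{F})$ which are band-limited (there is $b\ge0$ with $S(\mathcal{F}_n)\subseteq\bigoplus_{|m-n|\le b}\mathcal{F}_m$ for all $n$) and summable ($\sum_{n\ge0}\|S|_{\mathcal{F}_n}\|<\infty$). *)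

theory Defs
  imports "HOL-Analysis.Analysis"
begin

text \<open>The orthonormal basis vector xi_{i_1} (x) ... (x) xi_{i_n} is indexed by the word
  [i_1,...,i_n] with letters in {0..<d} (indices shifted from 1..d to 0..d-1);
  Omega is indexed by the empty word.
  Operators are functions on such vectors; only their action on the Fock space matters.\<close>

type_synonym vec = "nat list \<Rightarrow> complex"
type_synonym op = "vec \<Rightarrow> vec"

definition words :: "nat \<Rightarrow> nat list set" where
  "words d = {w. set w \<subseteq> {..<d}}"

definition Fock :: "nat \<Rightarrow> vec set" where
  "Fock d = {f. (\<forall>w. w \<notin> words d \<longrightarrow> f w = 0) \<and> (\<lambda>w. (cmod (f w))\<^sup>2) summable_on UNIV}"

definition fnorm :: "vec \<Rightarrow> real" where
  "fnorm f = sqrt (\<Sum>\<^sub>\<infinity>w. (cmod (f w))\<^sup>2)"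

definition Fock_n :: "nat \<Rightarrow> nat \<Rightarrow> vec set" where
  "Fock_n d n = {f \<in> Fock d. \<forall>w. length w \<noteq> n \<longrightarrow> f w = 0}"

definition bounded_op :: "nat \<Rightarrow> op \<Rightarrow> bool" where
  "bounded_op d T \<longleftrightarrow>
     (\<forall>f\<in>Fock d. T f \<in> Fock d) \<and>
     (\<forall>f\<in>Fock d. \<forall>g\<in>Fock d. \<forall>a b.
        T (\<lambda>w. a * f w + b * g w) = (\<lambda>w. a * T f w + b * T g w)) \<and>
     (\<exists>C. \<forall>f\<in>Fock d. fnorm (T f) \<le> C * fnorm f)"

definition opnorm :: "nat \<Rightarrow> op \<Rightarrow> real" where
  "opnorm d T = Sup {fnorm (T f) | f. f \<in> Fock d \<and> fnorm f \<le> 1}"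

definition resnorm :: "nat \<Rightarrow> op \<Rightarrow> nat \<Rightarrow> real" where
  "resnorm d S n = Sup {fnorm (S f) | f. f \<in> Fock_n d n \<and> fnorm f \<le> 1}"

definition op_add :: "op \<Rightarrow> op \<Rightarrow> op" where
  "op_add S T = (\<lambda>f w. S f w + T f w)"

definition op_diff :: "op \<Rightarrow> op \<Rightarrow> op" where
  "op_diff S T = (\<lambda>f w. S f w - T f w)"

definition op_scale :: "complex \<Rightarrow> op \<Rightarrow> op" where
  "op_scale c T = (\<lambda>f w. c * T f w)"

definition commutator :: "op \<Rightarrow> op \<Rightarrow> op" where
  "commutator S T = op_diff (S \<circ> T) (T \<circ> S)"

text \<open>Left creation L_i eta = xi_i (x) eta and its adjoint.\<close>
definition Lop :: "nat \<Rightarrow> op" where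
  "Lop i f = (\<lambda>w. case w of [] \<Rightarrow> 0 | j # v \<Rightarrow> (if j = i then f v else 0))"

definition Lop_adj :: "nat \<Rightarrow> op" where
  "Lop_adj i f = (\<lambda>w. f (i # w))"

text \<open>Right creation R_i eta = eta (x) xi_i and its adjoint R_i^*.\<close>
definition Rop :: "nat \<Rightarrow> op" where
  "Rop i f = (\<lambda>w. if w \<noteq> [] \<and> last w = i then f (butlast w) else 0)"

definition Rop_adj :: "nat \<Rightarrow> op" where
  "Rop_adj i f = (\<lambda>w. f (w @ [i]))"

definition block_diagonal :: "nat \<Rightarrow> op \<Rightarrow> bool" where
  "block_diagonal d T \<longleftrightarrow> (\<forall>n. \<forall>f\<in>Fock_n d n. T f \<in> Fock_n d n)"

definition band_limited :: "nat \<Rightarrow> op \<Rightarrow> bool" where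
  "band_limited d S \<longleftrightarrow> (\<exists>b::nat. \<forall>n. \<forall>f\<in>Fock_n d n. \<forall>w.
       (length w > n + b \<or> length w + b < n) \<longrightarrow> S f w = 0)"

definition classS :: "nat \<Rightarrow> op set" where
  "classS d = {S. bounded_op d S \<and> band_limited d S \<and> summable (\<lambda>n. resnorm d S n)}"

inductive_set star_alg_L :: "nat \<Rightarrow> op set" for d where
  gen_L: "i < d \<Longrightarrow> Lop i \<in> star_alg_L d"
| gen_Ladj: "i < d \<Longrightarrow> Lop_adj i \<in> star_alg_L d"
| add: "S \<in> star_alg_L d \<Longrightarrow> T \<in> star_alg_L d \<Longrightarrow> op_add S T \<in> star_alg_L d"
| scale: "S \<in> star_alg_L d \<Longrightarrow> op_scale c S \<in> star_alg_L d"
| comp: "S \<in> star_alg_L d \<Longrightarrow> T \<in> star_alg_L d \<Longrightarrow> S \<circ> T \<in> star_alg_L d"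

definition CstarL :: "nat \<Rightarrow> op set" where
  "CstarL d = {T. bounded_op d T \<and>
     (\<forall>e>0. \<exists>P\<in>star_alg_L d. opnorm d (op_diff T P) < e)}"

end

theory Submission imports Defs "HOL-Library.Function_Algebras" begin

definition W :: "nat \<Rightarrow> nat \<Rightarrow> nat list set" where
  "W d n = {w. length w = n \<and> set w \<subseteq> {..<d}}"

lemma finite_W: "finite (W d n)"
proof -
  have "finite {xs. set xs \<subseteq> {..<d} \<and> length xs = n}"
    by (rule finite_lists_length_eq) simp
  then show ?thesis unfolding W_def by (simp add: conj_commute)
qed

lemma W_words: "W d n \<subseteq> words d"
  unfolding W_def words_def by auto

lemma fnorm_nonneg: "fnorm f \<ge> 0"
  unfolding fnorm_def by (simp add: infsum_nonneg)

lemma fock_finite_supp: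
  assumes "finite A" "A \<subseteq> words d" "\<And>w. w \<notin> A \<Longrightarrow> f w = 0"
  shows "f \<in> Fock d"
proof -
  have "(\<lambda>w. (cmod (f w))\<^sup>2) summable_on A" using assms(1) by simp
  then have "(\<lambda>w. (cmod (f w))\<^sup>2) summable_on UNIV"
    by (rule summable_on_cong_neutral[THEN iffD1, rotated -1]) (use assms(3) in auto)
  then show ?thesis unfolding Fock_def using assms by auto
qed

lemma fnorm_finite_supp:
  assumes "finite A" "\<And>w. w \<notin> A \<Longrightarrow> f w = 0"
  shows "fnorm f = L2_set (\<lambda>w. cmod (f w)) A"
proof -
  have "(\<Sum>\<^sub>\<infinity>w. (cmod (f w))\<^sup>2) = (\<Sum>\<^sub>\<infinity>w\<in>A. (cmod (f w))\<^sup>2)"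
    by (rule infsum_cong_neutral) (use assms(2) in auto)
  also have "\<dots> = (\<Sum>w\<in>A. (cmod (f w))\<^sup>2)" using assms(1) by simp
  finally show ?thesis unfolding fnorm_def L2_set_def by simp
qed

lemma coord_le:
  assumes "f \<in> Fock d"
  shows "cmod (f w) \<le> fnorm f"
proof -
  have s: "(\<lambda>w. (cmod (f w))\<^sup>2) summable_on UNIV" using assms unfolding Fock_def by auto
  have "(\<Sum>x\<in>{w}. (cmod (f x))\<^sup>2) \<le> (\<Sum>\<^sub>\<infinity>x. (cmod (f x))\<^sup>2)"
    by (rule finite_sum_le_infsum[OF s]) auto
  then have "(cmod (f w))\<^sup>2 \<le> (\<Sum>\<^sub>\<infinity>x. (cmod (f x))\<^sup>2)" by simp
  then show ?thesis unfolding fnorm_def by (metis norm_ge_zero real_le_rsqrt)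
qed

lemma Fock_lin:
  assumes "f \<in> Fock d" "g \<in> Fock d"
  shows "(\<lambda>w. a * f w + b * g w) \<in> Fock d"
proof -
  have sf: "(\<lambda>w. (cmod (f w))\<^sup>2) summable_on UNIV" and sg: "(\<lambda>w. (cmod (g w))\<^sup>2) summable_on UNIV"
    using assms unfolding Fock_def by auto
  have s: "(\<lambda>w. 2 * (cmod a)\<^sup>2 * (cmod (f w))\<^sup>2 + 2 * (cmod b)\<^sup>2 * (cmod (g w))\<^sup>2) summable_on UNIV"
    by (intro summable_on_add summable_on_cmult_right sf sg)
  have le: "(cmod (a * f w + b * g w))\<^sup>2 \<le> 2 * (cmod a)\<^sup>2 * (cmod (f w))\<^sup>2 + 2 * (cmod b)\<^sup>2 * (cmod (g w))\<^sup>2" for w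
  proof -
    have "cmod (a * f w + b * g w) \<le> cmod a * cmod (f w) + cmod b * cmod (g w)"
      by (metis norm_mult norm_triangle_ineq)
    then have "(cmod (a * f w + b * g w))\<^sup>2 \<le> (cmod a * cmod (f w) + cmod b * cmod (g w))\<^sup>2"
      by (simp add: power_mono)
    also have "\<dots> \<le> 2 * (cmod a * cmod (f w))\<^sup>2 + 2 * (cmod b * cmod (g w))\<^sup>2"
      using sum_squares_ge_zero[of 1 0] by (smt (verit) power2_diff zero_le_power2 power2_sum)
    also have "\<dots> = 2 * (cmod a)\<^sup>2 * (cmod (f w))\<^sup>2 + 2 * (cmod b)\<^sup>2 * (cmod (g w))\<^sup>2"
      by (simp add: power_mult_distrib)
    finally show ?thesis .
  qed
  have "(\<lambda>w. (cmod (a * f w + b * g w))\<^sup>2) summable_on UNIV"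
    by (rule summable_on_comparison_test[OF s]) (use le in auto)
  then show ?thesis using assms unfolding Fock_def by auto
qed

lemma zero_Fock: "(\<lambda>w. 0) \<in> Fock d"
  by (rule fock_finite_supp[of "{}"]) auto

lemma bop_Fock: "bounded_op d T \<Longrightarrow> f \<in> Fock d \<Longrightarrow> T f \<in> Fock d"
  unfolding bounded_op_def by auto

lemma bop_lin: "bounded_op d T \<Longrightarrow> f \<in> Fock d \<Longrightarrow> g \<in> Fock d \<Longrightarrow>
   T (\<lambda>w. a * f w + b * g w) = (\<lambda>w. a * T f w + b * T g w)"
  unfolding bounded_op_def by blast

lemma bop_zero: assumes "bounded_op d T" shows "T (\<lambda>w. 0) = (\<lambda>w. 0)"
  using bop_lin[OF assms zero_Fock zero_Fock, of 0 0] by simp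

lemma bop_scale: assumes "bounded_op d T" "f \<in> Fock d"
  shows "T (\<lambda>w. a * f w) = (\<lambda>w. a * T f w)"
  using bop_lin[OF assms zero_Fock, of a 0] bop_zero[OF assms(1)] by simp

lemma bop_add: assumes "bounded_op d T" "f \<in> Fock d" "g \<in> Fock d"
  shows "T (\<lambda>w. f w + g w) = (\<lambda>w. T f w + T g w)"
  using bop_lin[OF assms, of 1 1] by simp

lemma bop_diff: assumes "bounded_op d T" "f \<in> Fock d" "g \<in> Fock d"
  shows "T (\<lambda>w. f w - g w) = (\<lambda>w. T f w - T g w)"
  using bop_lin[OF assms, of 1 "-1"] by simp

lemma Fock_add: "f \<in> Fock d \<Longrightarrow> g \<in> Fock d \<Longrightarrow> (\<lambda>w. f w + g w) \<in> Fock d"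
  using Fock_lin[of f d g 1 1] by simp

lemma Fock_diff: "f \<in> Fock d \<Longrightarrow> g \<in> Fock d \<Longrightarrow> (\<lambda>w. f w - g w) \<in> Fock d"
  using Fock_lin[of f d g 1 "-1"] by simp

lemma Fock_scale: "f \<in> Fock d \<Longrightarrow> (\<lambda>w. a * f w) \<in> Fock d"
  using Fock_lin[of f d "\<lambda>w. 0" a 0] zero_Fock by simp

lemma Fock_sum: "finite A \<Longrightarrow> (\<And>x. x \<in> A \<Longrightarrow> \<phi> x \<in> Fock d) \<Longrightarrow> (\<lambda>w. \<Sum>x\<in>A. \<phi> x w) \<in> Fock d"
proof (induction A rule: finite_induct)
  case empty then show ?case using zero_Fock by simp
next
  case (insert x F)
  then show ?case using Fock_add[of "\<phi> x" d "\<lambda>w. \<Sum>x\<in>F. \<phi> x w"] by simp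
qed

lemma bop_sum: assumes "bounded_op d T"
  shows "finite A \<Longrightarrow> (\<And>x. x \<in> A \<Longrightarrow> \<phi> x \<in> Fock d) \<Longrightarrow>
     T (\<lambda>w. \<Sum>x\<in>A. \<phi> x w) = (\<lambda>w. \<Sum>x\<in>A. T (\<phi> x) w)"
proof (induction A rule: finite_induct)
  case empty then show ?case using bop_zero[OF assms] by simp
next
  case (insert x F)
  have "T (\<lambda>w. \<Sum>x\<in>insert x F. \<phi> x w) = T (\<lambda>w. \<phi> x w + (\<Sum>x\<in>F. \<phi> x w))"
    using insert by simp
  also have "\<dots> = (\<lambda>w. T (\<phi> x) w + T (\<lambda>w. \<Sum>x\<in>F. \<phi> x w) w)"
    using bop_add[OF assms, of "\<phi> x" "\<lambda>w. \<Sum>x\<in>F. \<phi> x w"] insert Fock_sum[of F \<phi> d] by simp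
  finally show ?case using insert by simp
qed

lemma bop_lincomb: assumes T: "bounded_op d T"
  shows "finite A \<Longrightarrow> (\<And>x. x \<in> A \<Longrightarrow> \<phi> x \<in> Fock d) \<Longrightarrow>
    T (\<lambda>w. \<Sum>x\<in>A. a x * \<phi> x w) = (\<lambda>w. \<Sum>x\<in>A. a x * T (\<phi> x) w)"
proof (induction A rule: finite_induct)
  case empty then show ?case using bop_zero[OF T] by simp
next
  case (insert x F)
  have F: "(\<lambda>w. \<Sum>x\<in>F. a x * \<phi> x w) \<in> Fock d"
    using Fock_sum[of F "\<lambda>x w. a x * \<phi> x w" d] insert Fock_scale by blast
  have "T (\<lambda>w. \<Sum>x\<in>insert x F. a x * \<phi> x w) = T (\<lambda>w. a x * \<phi> x w + 1 * (\<Sum>x\<in>F. a x * \<phi> x w))"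
    using insert by simp
  also have "\<dots> = (\<lambda>w. a x * T (\<phi> x) w + 1 * T (\<lambda>w. \<Sum>x\<in>F. a x * \<phi> x w) w)"
    by (rule bop_lin[OF T]) (use insert F in auto)
  finally show ?case using insert by simp
qed

lemma bop_bound: assumes "bounded_op d T"
  obtains C where "C \<ge> 0" "\<And>f. f \<in> Fock d \<Longrightarrow> fnorm (T f) \<le> C * fnorm f"
proof -
  obtain C where C: "\<forall>f\<in>Fock d. fnorm (T f) \<le> C * fnorm f" using assms unfolding bounded_op_def by blast
  have "fnorm (T f) \<le> max C 0 * fnorm f" if "f \<in> Fock d" for f
  proof -
    have "C * fnorm f \<le> max C 0 * fnorm f" by (rule mult_right_mono) (auto simp: fnorm_nonneg)
    then show ?thesis using C that by (meson order_trans)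
  qed
  then show ?thesis using that[of "max C 0"] by auto
qed

definition proj :: "nat \<Rightarrow> vec \<Rightarrow> vec" where
  "proj n f = (\<lambda>w. if length w = n then f w else 0)"

lemma Fock_zero_out: "f \<in> Fock d \<Longrightarrow> w \<notin> words d \<Longrightarrow> f w = 0"
  unfolding Fock_def by auto

lemma proj_Fock_n: assumes "f \<in> Fock d" shows "proj n f \<in> Fock_n d n"
proof -
  have "proj n f \<in> Fock d"
    by (rule fock_finite_supp[OF finite_W W_words, of d n])
       (use assms in \<open>auto simp: proj_def W_def words_def Fock_def\<close>)
  then show ?thesis unfolding Fock_n_def proj_def by auto
qed

lemma tail_small:
  assumes "f \<in> Fock d" "e > 0"
  shows "\<exists>N. fnorm (\<lambda>w. if length w > N then f w else 0) < e"
proof -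
  define g where "g = (\<lambda>w. (cmod (f w))\<^sup>2)"
  have sg: "g summable_on UNIV" using assms unfolding Fock_def g_def by auto
  have e2: "e\<^sup>2 / 2 > 0" using assms by simp
  obtain F where F: "finite F" "dist (sum g F) (infsum g UNIV) \<le> e\<^sup>2 / 2"
    using infsum_finite_approximation[OF sg e2] by blast
  define N where "N = Max (insert 0 (length ` F))"
  have FN: "length w \<le> N" if "w \<in> F" for w
    unfolding N_def using F(1) that by (intro Max_ge) auto
  define B where "B = {w::nat list. length w > N}"
  have sB: "g summable_on B" and sB': "g summable_on (UNIV - B)"
    using summable_on_subset[OF sg] by auto
  have "infsum g UNIV = infsum g (UNIV - B) + infsum g B"
  proof -
    have u: "(UNIV - B) \<union> B = UNIV" by auto
    have "infsum g ((UNIV - B) \<union> B) = infsum g (UNIV - B) + infsum g B"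
      by (rule infsum_Un_disjoint[OF sB' sB]) auto
    then show ?thesis by (simp only: u)
  qed
  moreover have "sum g F \<le> infsum g (UNIV - B)"
    by (rule finite_sum_le_infsum[OF sB' F(1)]) (auto simp: B_def g_def dest: FN)
  ultimately have "infsum g B \<le> e\<^sup>2 / 2" using F(2) unfolding dist_real_def by linarith
  moreover have "(\<Sum>\<^sub>\<infinity>w. (cmod (if length w > N then f w else 0))\<^sup>2) = infsum g B"
    by (rule infsum_cong_neutral) (auto simp: B_def g_def)
  ultimately have "(\<Sum>\<^sub>\<infinity>w. (cmod (if length w > N then f w else 0))\<^sup>2) < e\<^sup>2" using e2 by linarith
  then have "fnorm (\<lambda>w. if length w > N then f w else 0) < sqrt (e\<^sup>2)"
    unfolding fnorm_def by (simp only: real_sqrt_less_iff)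
  then show ?thesis using assms(2) by auto
qed

lemma block_eval:
  assumes T: "bounded_op d T" "block_diagonal d T" and f: "f \<in> Fock d" and w: "length w = n"
  shows "T f w = T (proj n f) w"
proof -
  obtain C where C: "C \<ge> 0" "\<And>f. f \<in> Fock d \<Longrightarrow> fnorm (T f) \<le> C * fnorm f"
    using bop_bound[OF T(1)] by blast
  have "cmod (T f w - T (proj n f) w) \<le> e" if e: "e > 0" for e
  proof -
    have "e / (C + 1) > 0" using e C by simp
    then obtain N0 where N0: "fnorm (\<lambda>w. if length w > N0 then f w else 0) < e / (C + 1)"
      using tail_small[OF f] by blast
    define N where "N = max N0 n"
    have tl: "fnorm (\<lambda>w. if length w > N then f w else 0) < e / (C + 1)"
    proof -
      have "(\<lambda>w. if length w > N then f w else 0) = (\<lambda>w. if length w > N then (if length w > N0 then f w else 0) else 0)"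
        unfolding N_def by auto
      have "fnorm (\<lambda>w. if length w > N then f w else 0) \<le> fnorm (\<lambda>w. if length w > N0 then f w else 0)"
        unfolding fnorm_def
      proof (rule real_sqrt_le_mono, rule infsum_mono_neutral)
        show "(\<lambda>w. (cmod (if length w > N then f w else 0))\<^sup>2) summable_on UNIV"
          by (rule summable_on_comparison_test[of "\<lambda>w. (cmod (f w))\<^sup>2"]) (use f in \<open>auto simp: Fock_def\<close>)
        show "(\<lambda>w. (cmod (if length w > N0 then f w else 0))\<^sup>2) summable_on UNIV"
          by (rule summable_on_comparison_test[of "\<lambda>w. (cmod (f w))\<^sup>2"]) (use f in \<open>auto simp: Fock_def\<close>)
      qed (auto simp: N_def)
      then show ?thesis using N0 by linarith
    qed
    define q where "q = (\<lambda>x. \<Sum>m\<in>{..N}. proj m f x)"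
    define t where "t = (\<lambda>w. if length w > N then f w else 0)"
    have qF: "q \<in> Fock d" unfolding q_def
      by (rule Fock_sum) (use proj_Fock_n[OF f] in \<open>auto simp: Fock_n_def\<close>)
    have ft: "t = (\<lambda>x. f x - q x)"
      unfolding t_def q_def proj_def by (auto simp: if_distrib sum.delta cong: if_cong)
    have tF: "t \<in> Fock d" using ft Fock_diff[OF f qF] by simp
    have "T q = (\<lambda>x. \<Sum>m\<in>{..N}. T (proj m f) x)"
      unfolding q_def by (rule bop_sum[OF T(1)]) (use proj_Fock_n[OF f] in \<open>auto simp: Fock_n_def\<close>)
    moreover have "T (proj m f) w = 0" if "m \<noteq> n" for m
      using T(2) proj_Fock_n[OF f, of m] that w unfolding block_diagonal_def Fock_n_def by auto
    ultimately have Tq: "T q w = T (proj n f) w"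
    proof -
      assume a1: "T q = (\<lambda>x. \<Sum>m\<in>{..N}. T (proj m f) x)" and a2: "\<And>m. m \<noteq> n \<Longrightarrow> T (proj m f) w = 0"
      have "n \<in> {..N}" unfolding N_def by auto
      then have "(\<Sum>m\<in>{..N}. T (proj m f) w) = T (proj n f) w + (\<Sum>m\<in>{..N} - {n}. T (proj m f) w)"
        by (simp add: sum.remove)
      also have "(\<Sum>m\<in>{..N} - {n}. T (proj m f) w) = 0" by (rule sum.neutral) (use a2 in auto)
      finally show ?thesis using a1 by simp
    qed
    have "T t = (\<lambda>x. T f x - T q x)" using bop_diff[OF T(1) f qF] ft by simp
    then have "T f w - T (proj n f) w = T t w" using Tq by simp
    then have "cmod (T f w - T (proj n f) w) \<le> fnorm (T t)"
      using coord_le[OF bop_Fock[OF T(1) tF]] by simp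
    also have "\<dots> \<le> C * fnorm t" using C(2)[OF tF] .
    also have "\<dots> \<le> C * (e / (C + 1))" using tl C(1) unfolding t_def by (intro mult_left_mono) auto
    also have "\<dots> \<le> e" using C(1) e by (simp add: field_simps)
    finally show ?thesis .
  qed
  then have "cmod (T f w - T (proj n f) w) = 0"
    by (metis dual_order.antisym norm_ge_zero field_lbound_gt_zero less_le_not_le)
  then show ?thesis by simp
qed


definition Iop :: op where "Iop = Lop_adj 0 \<circ> Lop 0"

lemma Iop_eq[simp]: "Iop f = f"
  unfolding Iop_def Lop_def Lop_adj_def by auto

lemma Iop_alg: "0 < d \<Longrightarrow> Iop \<in> star_alg_L d"
  unfolding Iop_def by (intro star_alg_L.comp star_alg_L.gen_L star_alg_L.gen_Ladj)

lemma zero_alg: "0 < d \<Longrightarrow> (0::op) \<in> star_alg_L d"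
proof -
  assume "0 < d"
  then have "op_scale 0 Iop \<in> star_alg_L d" by (intro star_alg_L.scale Iop_alg)
  moreover have "op_scale 0 Iop = 0" unfolding op_scale_def by (auto simp: fun_eq_iff)
  ultimately show ?thesis by simp
qed

lemma op_add_plus: "op_add S T = S + T"
  unfolding op_add_def by (auto simp: fun_eq_iff)

lemma sum_alg: assumes d: "0 < d" shows "finite A \<Longrightarrow> (\<And>x. x \<in> A \<Longrightarrow> F x \<in> star_alg_L d) \<Longrightarrow> sum F A \<in> star_alg_L d"
proof (induction A rule: finite_induct)
  case empty show ?case unfolding sum.empty by (rule zero_alg[OF d])
next
  case (insert x A)
  have "F x + sum F A \<in> star_alg_L d" using insert star_alg_L.add[of "F x" d "sum F A"] by (simp add: op_add_plus)
  moreover have "sum F (insert x A) = F x + sum F A" using insert(1,2) by (rule sum.insert)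
  ultimately show ?case by (simp only:)
qed

lemma sum_op_apply: "(sum F A :: op) f w = (\<Sum>x\<in>A. F x f w)"
  by (induction A rule: infinite_finite_induct) auto

fun lu :: "nat list \<Rightarrow> op" where
  "lu [] = Iop"
| "lu (i # u) = Lop i \<circ> lu u"

fun la :: "nat list \<Rightarrow> op" where
  "la [] = Iop"
| "la (i # u) = la u \<circ> Lop_adj i"

lemma lu_eval: "lu u f w = (if take (length u) w = u then f (drop (length u) w) else 0)"
proof (induction u arbitrary: w)
  case Nil then show ?case by simp
next
  case (Cons i u)
  then show ?case by (cases w) (auto simp: Lop_def)
qed

lemma la_eval: "la u f x = f (u @ x)"
  by (induction u arbitrary: f) (auto simp: Lop_adj_def)

lemma lu_alg: "0 < d \<Longrightarrow> set u \<subseteq> {..<d} \<Longrightarrow> lu u \<in> star_alg_L d"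
  by (induction u) (auto intro: Iop_alg star_alg_L.comp star_alg_L.gen_L)

lemma la_alg: "0 < d \<Longrightarrow> set u \<subseteq> {..<d} \<Longrightarrow> la u \<in> star_alg_L d"
  by (induction u) (auto intro: Iop_alg star_alg_L.comp star_alg_L.gen_Ladj)

definition PO :: "nat \<Rightarrow> op" where
  "PO d = op_add Iop (op_scale (-1) (\<Sum>i\<in>{..<d}. Lop i \<circ> Lop_adj i))"

lemma PO_alg: "0 < d \<Longrightarrow> PO d \<in> star_alg_L d"
  unfolding PO_def
  by (intro star_alg_L.add star_alg_L.scale Iop_alg sum_alg) (auto intro: star_alg_L.comp star_alg_L.gen_L star_alg_L.gen_Ladj)

lemma PO_eval: "PO d g x = (if x = [] then g [] else if hd x < d then 0 else g x)"
proof (cases x)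
  case Nil then show ?thesis
    unfolding PO_def op_add_def op_scale_def by (simp add: sum_op_apply Lop_def)
next
  case (Cons j v)
  have "(\<Sum>i\<in>{..<d}. (Lop i \<circ> Lop_adj i) g x) = (\<Sum>i\<in>{..<d}. if j = i then g x else 0)"
    using Cons by (intro sum.cong) (auto simp: Lop_def Lop_adj_def)
  also have "\<dots> = (if j < d then g x else 0)" by (simp add: sum.delta)
  finally show ?thesis unfolding PO_def op_add_def op_scale_def using Cons by (simp add: sum_op_apply)
qed

definition cc :: "op \<Rightarrow> nat list \<Rightarrow> nat list \<Rightarrow> complex" where
  "cc T u u' = T (\<lambda>x. if x = u' then 1 else 0) u"

definition Pk :: "nat \<Rightarrow> op \<Rightarrow> nat \<Rightarrow> op" where
  "Pk d T k = (\<Sum>m\<in>{..<k}. \<Sum>u\<in>W d m. \<Sum>u'\<in>W d m. op_scale (cc T u u') (lu u \<circ> PO d \<circ> la u'))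
     + (\<Sum>u\<in>W d k. \<Sum>u'\<in>W d k. op_scale (cc T u u') (lu u \<circ> la u'))"

lemma Pk_alg: "0 < d \<Longrightarrow> Pk d T k \<in> star_alg_L d"
  unfolding Pk_def op_add_plus[symmetric]
  by (intro star_alg_L.add sum_alg finite_W star_alg_L.scale star_alg_L.comp lu_alg la_alg PO_alg)
     (auto simp: W_def)

lemma W_mem: "w \<in> W d n \<longleftrightarrow> length w = n \<and> set w \<subseteq> {..<d}"
  unfolding W_def by auto

lemma term1_eval:
  assumes "f \<in> Fock d"
  shows "lu u (PO d (la u' f)) w = (if w = u then f u' else 0)"
proof -
  have "lu u (PO d (la u' f)) w = (if take (length u) w = u then PO d (la u' f) (drop (length u) w) else 0)"
    by (simp add: lu_eval)
  also have "\<dots> = (if w = u then f u' else 0)"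
  proof (cases "take (length u) w = u")
    case True
    show ?thesis
    proof (cases "drop (length u) w = []")
      case True
      then show ?thesis using \<open>take (length u) w = u\<close> by (simp add: PO_eval la_eval)
    next
      case False
      then obtain j v where jv: "drop (length u) w = j # v" by (cases "drop (length u) w") auto
      have "w \<noteq> u" using False True by auto
      moreover have "f (u' @ j # v) = 0" if "\<not> j < d"
        by (rule Fock_zero_out[OF assms(1)]) (use that in \<open>auto simp: words_def\<close>)
      ultimately show ?thesis using True jv by (simp add: PO_eval la_eval)
    qed
  next
    case False
    then show ?thesis by auto
  qed
  finally show ?thesis .
qed

lemma term2_eval:
  shows "lu u (la u' f) w = (if take (length u) w = u then f (u' @ drop (length u) w) else 0)"
  by (simp add: lu_eval la_eval)

lemma Pk_eval_low:
  assumes "f \<in> Fock d" "w \<in> W d n" "n < k"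
  shows "Pk d T k f w = (\<Sum>u'\<in>W d n. cc T w u' * f u')"
proof -
  have A: "(\<Sum>m\<in>{..<k}. \<Sum>u\<in>W d m. \<Sum>u'\<in>W d m. op_scale (cc T u u') (lu u \<circ> PO d \<circ> la u') f w)
      = (\<Sum>m\<in>{..<k}. if m = n then (\<Sum>u'\<in>W d n. cc T w u' * f u') else 0)"
  proof (rule sum.cong[OF refl])
    fix m assume "m \<in> {..<k}"
    have "(\<Sum>u\<in>W d m. \<Sum>u'\<in>W d m. op_scale (cc T u u') (lu u \<circ> PO d \<circ> la u') f w)
        = (\<Sum>u\<in>W d m. if w = u then (\<Sum>u'\<in>W d m. cc T u u' * f u') else 0)"
      by (intro sum.cong refl) (auto simp: op_scale_def term1_eval[OF assms(1)] if_distrib cong: if_cong)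
    also have "\<dots> = (if m = n then (\<Sum>u'\<in>W d n. cc T w u' * f u') else 0)"
      using assms(2) finite_W by (auto simp: sum.delta W_mem)
    finally show "(\<Sum>u\<in>W d m. \<Sum>u'\<in>W d m. op_scale (cc T u u') (lu u \<circ> PO d \<circ> la u') f w) = \<dots>" .
  qed
  have B: "(\<Sum>u\<in>W d k. \<Sum>u'\<in>W d k. op_scale (cc T u u') (lu u \<circ> la u') f w) = 0"
  proof (intro sum.neutral ballI)
    fix u u' assume "u \<in> W d k" "u' \<in> W d k"
    then have "take (length u) w \<noteq> u" using assms(2,3) by (auto simp: W_mem)
    then show "op_scale (cc T u u') (lu u \<circ> la u') f w = 0" by (simp add: op_scale_def term2_eval)
  qed
  show ?thesis unfolding Pk_def using A B assms(3)
    by (simp add: sum_op_apply sum.delta)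
qed

lemma Pk_eval_high:
  assumes "f \<in> Fock d" "w \<in> W d n" "k \<le> n"
  shows "Pk d T k f w = (\<Sum>u'\<in>W d k. cc T (take k w) u' * f (u' @ drop k w))"
proof -
  have A: "(\<Sum>m\<in>{..<k}. \<Sum>u\<in>W d m. \<Sum>u'\<in>W d m. op_scale (cc T u u') (lu u \<circ> PO d \<circ> la u') f w) = 0"
  proof (intro sum.neutral ballI)
    fix m u u' assume "m \<in> {..<k}" "u \<in> W d m" "u' \<in> W d m"
    then have "w \<noteq> u" using assms(2,3) by (auto simp: W_mem)
    then show "op_scale (cc T u u') (lu u \<circ> PO d \<circ> la u') f w = 0"
      by (simp add: op_scale_def term1_eval[OF assms(1)])
  qed
  have tk: "take k w \<in> W d k" using assms(2,3) by (auto simp: W_mem dest: in_set_takeD)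
  have "(\<Sum>u\<in>W d k. \<Sum>u'\<in>W d k. op_scale (cc T u u') (lu u \<circ> la u') f w)
      = (\<Sum>u\<in>W d k. if take k w = u then (\<Sum>u'\<in>W d k. cc T u u' * f (u' @ drop k w)) else 0)"
    by (intro sum.cong refl) (auto simp: op_scale_def term2_eval W_mem)
  also have "\<dots> = (\<Sum>u'\<in>W d k. cc T (take k w) u' * f (u' @ drop k w))"
    using tk finite_W by (simp add: sum.delta)
  finally show ?thesis unfolding Pk_def using A by (simp add: sum_op_apply)
qed


lemma delta_Fock: "u \<in> W d m \<Longrightarrow> (\<lambda>x. if x = u then 1 else 0) \<in> Fock d"
  by (rule fock_finite_supp[of "{u}"]) (use W_words in auto)

lemma Fock_n_out: "f \<in> Fock_n d n \<Longrightarrow> w \<notin> W d n \<Longrightarrow> f w = 0"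
  unfolding Fock_n_def Fock_def W_def words_def by auto

lemma Fock_n_Fock: "f \<in> Fock_n d n \<Longrightarrow> f \<in> Fock d"
  unfolding Fock_n_def by auto

lemma T_expand:
  assumes T: "bounded_op d T" and g: "g \<in> Fock_n d m"
  shows "T g x = (\<Sum>u'\<in>W d m. cc T x u' * g u')"
proof -
  have "g = (\<lambda>x. \<Sum>u'\<in>W d m. g u' * (\<lambda>x. if x = u' then 1 else 0) x)"
  proof
    fix x show "g x = (\<Sum>u'\<in>W d m. g u' * (\<lambda>x. if x = u' then 1 else 0) x)"
      using Fock_n_out[OF g, of x] finite_W by (auto simp: if_distrib sum.delta cong: if_cong)
  qed
  then have "T g = T (\<lambda>x. \<Sum>u'\<in>W d m. g u' * (\<lambda>x. if x = u' then 1 else 0) x)" by simp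
  also have "\<dots> = (\<lambda>x. \<Sum>u'\<in>W d m. g u' * T (\<lambda>x. if x = u' then 1 else 0) x)"
    by (rule bop_lincomb[OF T finite_W]) (rule delta_Fock)
  finally show ?thesis by (simp add: cc_def mult.commute)
qed

definition Radj :: "nat list \<Rightarrow> vec \<Rightarrow> vec" where
  "Radj v f = (\<lambda>x. f (x @ v))"

lemma Radj_Fock_n:
  assumes "f \<in> Fock_n d n"
  shows "Radj v f \<in> Fock_n d (n - length v)"
proof -
  have out: "Radj v f x = 0" if "x \<notin> W d (n - length v)" for x
  proof -
    have "x @ v \<notin> W d n" using that by (auto simp: W_mem)
    then show ?thesis using Fock_n_out[OF assms] unfolding Radj_def by auto
  qed
  have "Radj v f \<in> Fock d" by (rule fock_finite_supp[OF finite_W W_words]) (rule out)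
  then show ?thesis unfolding Fock_n_def using out by (auto simp: W_mem)
qed

lemma P_low:
  assumes T: "bounded_op d T" and f: "f \<in> Fock_n d n" and w: "w \<in> W d n" and "n < k"
  shows "Pk d T k f w = T f w"
  using Pk_eval_low[OF Fock_n_Fock[OF f] w assms(4)] T_expand[OF T f] by simp

lemma P_high:
  assumes T: "bounded_op d T" and f: "f \<in> Fock_n d n" and w: "w \<in> W d n" and "k \<le> n"
  shows "Pk d T k f w = T (Radj (drop k w) f) (take k w)"
proof -
  have "Radj (drop k w) f \<in> Fock_n d k" using Radj_Fock_n[OF f, of "drop k w"] w assms(4) by (simp add: W_mem)
  then show ?thesis using Pk_eval_high[OF Fock_n_Fock[OF f] w assms(4)] T_expand[OF T]
    by (simp add: Radj_def)
qed

lemma Pk_out: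
  assumes f: "f \<in> Fock d" and w: "w \<notin> words d"
  shows "Pk d T k f w = 0"
proof -
  have A: "(\<Sum>m\<in>{..<k}. \<Sum>u\<in>W d m. \<Sum>u'\<in>W d m. op_scale (cc T u u') (lu u \<circ> PO d \<circ> la u') f w) = 0"
  proof (intro sum.neutral ballI)
    fix m u u' assume "m \<in> {..<k}" "u \<in> W d m" "u' \<in> W d m"
    then have "w \<noteq> u" using w W_words by auto
    then show "op_scale (cc T u u') (lu u \<circ> PO d \<circ> la u') f w = 0"
      by (simp add: op_scale_def term1_eval[OF f])
  qed
  have B: "(\<Sum>u\<in>W d k. \<Sum>u'\<in>W d k. op_scale (cc T u u') (lu u \<circ> la u') f w) = 0"
  proof (intro sum.neutral ballI)
    fix u u' assume u: "u \<in> W d k" and u': "u' \<in> W d k"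
    show "op_scale (cc T u u') (lu u \<circ> la u') f w = 0"
    proof (cases "take (length u) w = u")
      case True
      then have "w = u @ drop (length u) w" by (metis append_take_drop_id)
      have "\<not> set (drop (length u) w) \<subseteq> {..<d}"
      proof
        assume "set (drop (length u) w) \<subseteq> {..<d}"
        then have "set (u @ drop (length u) w) \<subseteq> {..<d}" using u by (auto simp: W_mem)
        then show False using w \<open>w = u @ drop (length u) w\<close> by (metis words_def mem_Collect_eq)
      qed
      then have "u' @ drop (length u) w \<notin> words d" by (auto simp: words_def)
      then show ?thesis by (simp add: op_scale_def term2_eval Fock_zero_out[OF f])
    qed (simp add: op_scale_def term2_eval)
  qed
  show ?thesis unfolding Pk_def using A B by (simp add: sum_op_apply)
qed

lemma fnorm_scale: "fnorm (\<lambda>w. c * h w) = cmod c * fnorm h"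
proof -
  have "(\<Sum>\<^sub>\<infinity>w. (cmod (c * h w))\<^sup>2) = (\<Sum>\<^sub>\<infinity>w. (cmod c)\<^sup>2 * (cmod (h w))\<^sup>2)"
    by (simp add: norm_mult power_mult_distrib)
  also have "\<dots> = (cmod c)\<^sup>2 * (\<Sum>\<^sub>\<infinity>w. (cmod (h w))\<^sup>2)" by (rule infsum_cmult_right')
  finally show ?thesis unfolding fnorm_def by (simp add: real_sqrt_mult)
qed

lemma Fock_n_scale: "f \<in> Fock_n d n \<Longrightarrow> (\<lambda>w. c * f w) \<in> Fock_n d n"
  using Fock_scale unfolding Fock_n_def by auto

lemma resnorm_set_bdd:
  assumes "bounded_op d S"
  shows "bdd_above {fnorm (S f) | f. f \<in> Fock_n d n \<and> fnorm f \<le> 1}"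
proof -
  obtain C where C: "C \<ge> 0" "\<And>f. f \<in> Fock d \<Longrightarrow> fnorm (S f) \<le> C * fnorm f" using bop_bound[OF assms] by blast
  have "fnorm (S f) \<le> C" if "f \<in> Fock_n d n" "fnorm f \<le> 1" for f
    using C(2)[OF Fock_n_Fock[OF that(1)]] that(2) C(1) by (meson mult_left_le order_trans)
  then show ?thesis unfolding bdd_above_def by blast
qed

lemma zero_Fock_n: "(\<lambda>w. 0) \<in> Fock_n d n"
  unfolding Fock_n_def using zero_Fock by auto

lemma fnorm_zero: "fnorm (\<lambda>w. 0) = 0"
  unfolding fnorm_def by simp

lemma resnorm_nonneg:
  assumes "bounded_op d S" shows "resnorm d S n \<ge> 0"
proof -
  have "fnorm (S (\<lambda>w. 0)) \<in> {fnorm (S f) | f. f \<in> Fock_n d n \<and> fnorm f \<le> 1}"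
    using zero_Fock_n fnorm_zero by fastforce
  then have "fnorm (S (\<lambda>w. 0)) \<le> resnorm d S n"
    unfolding resnorm_def by (rule cSup_upper[OF _ resnorm_set_bdd[OF assms]])
  then show ?thesis using fnorm_nonneg order_trans by blast
qed

lemma fnorm_eq_zero:
  assumes "f \<in> Fock_n d n" "fnorm f = 0" shows "f = (\<lambda>w. 0)"
proof -
  have "fnorm f = L2_set (\<lambda>w. cmod (f w)) (W d n)"
    by (rule fnorm_finite_supp[OF finite_W]) (rule Fock_n_out[OF assms(1)])
  then have "\<forall>w\<in>W d n. cmod (f w) = 0" using assms(2) L2_set_eq_0_iff[OF finite_W] by auto
  then show ?thesis using Fock_n_out[OF assms(1)] by (auto simp: fun_eq_iff)
qed

lemma resnorm_bound:
  assumes S: "bounded_op d S" and f: "f \<in> Fock_n d n"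
  shows "fnorm (S f) \<le> resnorm d S n * fnorm f"
proof (cases "fnorm f = 0")
  case True
  then have "f = (\<lambda>w. 0)" using fnorm_eq_zero[OF f] by simp
  then show ?thesis using bop_zero[OF S] fnorm_zero by simp
next
  case False
  then have pos: "fnorm f > 0" using fnorm_nonneg[of f] by simp
  define g where "g = (\<lambda>w. complex_of_real (1 / fnorm f) * f w)"
  have g: "g \<in> Fock_n d n" unfolding g_def by (rule Fock_n_scale[OF f])
  have "fnorm g = 1" unfolding g_def fnorm_scale using pos by (simp add: norm_divide)
  then have "fnorm (S g) \<in> {fnorm (S f) | f. f \<in> Fock_n d n \<and> fnorm f \<le> 1}" using g by auto
  then have le: "fnorm (S g) \<le> resnorm d S n"
    unfolding resnorm_def by (rule cSup_upper[OF _ resnorm_set_bdd[OF S]])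
  have "S g = (\<lambda>w. complex_of_real (1 / fnorm f) * S f w)"
    unfolding g_def by (rule bop_scale[OF S Fock_n_Fock[OF f]])
  then have "fnorm (S g) = cmod (complex_of_real (1 / fnorm f)) * fnorm (S f)" by (simp only: fnorm_scale)
  then have "fnorm (S g) = fnorm (S f) / fnorm f" using pos by (simp add: norm_divide)
  then show ?thesis using le pos by (simp add: divide_le_eq)
qed

lemma L2_le_fnorm:
  assumes "g \<in> Fock d" "finite A"
  shows "L2_set (\<lambda>w. cmod (g w)) A \<le> fnorm g"
proof -
  have s: "(\<lambda>w. (cmod (g w))\<^sup>2) summable_on UNIV" using assms unfolding Fock_def by auto
  have "(\<Sum>w\<in>A. (cmod (g w))\<^sup>2) \<le> (\<Sum>\<^sub>\<infinity>w. (cmod (g w))\<^sup>2)"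
    by (rule finite_sum_le_infsum[OF s assms(2)]) auto
  then show ?thesis unfolding L2_set_def fnorm_def by simp
qed

lemma L2_set_prod:
  assumes "finite A" "finite B"
  shows "L2_set h (A \<times> B) = L2_set (\<lambda>b. L2_set (\<lambda>a. h (a, b)) A) B"
proof -
  have "(\<Sum>b\<in>B. \<Sum>a\<in>A. (h (a, b))\<^sup>2) = (\<Sum>a\<in>A. \<Sum>b\<in>B. (h (a, b))\<^sup>2)" by (rule sum.swap)
  also have "\<dots> = (\<Sum>(a, b)\<in>A \<times> B. (h (a, b))\<^sup>2)" by (rule sum.cartesian_product)
  also have "\<dots> = (\<Sum>p\<in>A \<times> B. (h p)\<^sup>2)" by (rule sum.cong) auto
  finally have "(\<Sum>p\<in>A \<times> B. (h p)\<^sup>2) = (\<Sum>b\<in>B. \<Sum>a\<in>A. (h (a, b))\<^sup>2)" by simp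
  also have "\<dots> = (\<Sum>b\<in>B. (L2_set (\<lambda>a. h (a, b)) A)\<^sup>2)"
    unfolding L2_set_def by (simp add: sum_nonneg)
  finally show ?thesis unfolding L2_set_def[of h] by (simp add: L2_set_def[of _ B])
qed

lemma W_Suc: "W d (Suc n) = (\<lambda>(w, i). w @ [i]) ` (W d n \<times> {..<d})"
proof
  show "W d (Suc n) \<subseteq> (\<lambda>(w, i). w @ [i]) ` (W d n \<times> {..<d})"
  proof
    fix x assume x: "x \<in> W d (Suc n)"
    then have "x \<noteq> []" by (auto simp: W_mem)
    then have "x = butlast x @ [last x]" by simp
    moreover have "last x \<in> set x" using \<open>x \<noteq> []\<close> by simp
    then have "last x < d" using x by (auto simp: W_mem)
    moreover have "butlast x \<in> W d n" using x by (auto simp: W_mem dest: in_set_butlastD)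
    ultimately show "x \<in> (\<lambda>(w, i). w @ [i]) ` (W d n \<times> {..<d})" by force
  qed
qed (auto simp: W_mem)

lemma inj_snoc: "inj_on (\<lambda>(w::nat list, i::nat). w @ [i]) A"
  by (auto simp: inj_on_def)

lemma L2_W_Suc: "L2_set g (W d (Suc n)) = L2_set (\<lambda>(w, i). g (w @ [i])) (W d n \<times> {..<d})"
  unfolding L2_set_def W_Suc by (subst sum.reindex[OF inj_snoc]) (simp add: case_prod_beta)


definition err :: "op \<Rightarrow> nat \<Rightarrow> vec \<Rightarrow> nat list \<Rightarrow> complex" where
  "err T k f w = T f w - T (Radj (drop k w) f) (take k w)"

definition rho :: "nat \<Rightarrow> op \<Rightarrow> nat \<Rightarrow> real" where
  "rho d T m = (\<Sum>i<d. resnorm d (commutator T (Rop_adj i)) m)"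

definition Sj :: "nat \<Rightarrow> op \<Rightarrow> nat \<Rightarrow> nat \<Rightarrow> real" where
  "Sj d T k j = (\<Sum>m<j. rho d T (Suc (k + m)))"

lemma comm_eval: "commutator T (Rop_adj i) f w = T (Rop_adj i f) w - T f (w @ [i])"
  unfolding commutator_def op_diff_def Rop_adj_def by simp

lemma Rop_adj_Radj: "Rop_adj i f = Radj [i] f"
  unfolding Rop_adj_def Radj_def by simp

lemma Radj_snoc: "Radj (v @ [i]) f = Radj v (Rop_adj i f)"
  unfolding Rop_adj_def Radj_def by simp

lemma rho_nonneg: "(\<forall>i<d. bounded_op d (commutator T (Rop_adj i))) \<Longrightarrow> rho d T m \<ge> 0"
  unfolding rho_def by (intro sum_nonneg) (auto intro: resnorm_nonneg)

lemma Sj_nonneg: "(\<forall>i<d. bounded_op d (commutator T (Rop_adj i))) \<Longrightarrow> Sj d T k j \<ge> 0"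
  unfolding Sj_def by (intro sum_nonneg rho_nonneg)

lemma err_bound:
  assumes T: "bounded_op d T" and D: "\<forall>i<d. bounded_op d (commutator T (Rop_adj i))"
  shows "f \<in> Fock_n d (k + j) \<Longrightarrow> L2_set (\<lambda>w. cmod (err T k f w)) (W d (k + j)) \<le> Sj d T k j * fnorm f"
proof (induction j arbitrary: f)
  case 0
  have "err T k f w = 0" if "w \<in> W d k" for w
    using that unfolding err_def Radj_def by (simp add: W_mem)
  then have "L2_set (\<lambda>w. cmod (err T k f w)) (W d (k + 0)) = 0"
    by (simp add: L2_set_eq_0_iff[OF finite_W])
  then show ?case by (simp add: Sj_def)
next
  case (Suc j)
  define n where "n = k + j"
  have f: "f \<in> Fock_n d (Suc n)" using Suc.prems unfolding n_def by simp
  define R where "R i = Rop_adj i f" for i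
  define DD where "DD i = commutator T (Rop_adj i)" for i
  have Rf: "R i \<in> Fock_n d n" for i
    using Radj_Fock_n[OF f, of "[i]"] unfolding R_def Rop_adj_Radj by simp
  have key: "err T k f (w @ [i]) = err T k (R i) w - DD i f w" if "w \<in> W d n" for w i
  proof -
    have lw: "k \<le> length w" using that unfolding n_def by (simp add: W_mem)
    have "take k (w @ [i]) = take k w" using lw by simp
    moreover have "drop k (w @ [i]) = drop k w @ [i]" using lw by simp
    ultimately show ?thesis
      unfolding err_def DD_def R_def comm_eval by (simp add: Radj_snoc)
  qed
  have S0: "Sj d T k j \<ge> 0" using Sj_nonneg[OF D] .
  have fR: "fnorm (R i) = L2_set (\<lambda>w. cmod (f (w @ [i]))) (W d n)" for i
    by (subst fnorm_finite_supp[OF finite_W Fock_n_out[OF Rf]]) (simp_all add: R_def Rop_adj_def)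
  have ff: "fnorm f = L2_set (\<lambda>w. cmod (f w)) (W d (Suc n))"
    by (rule fnorm_finite_supp[OF finite_W Fock_n_out[OF f]])
  have "L2_set (\<lambda>w. cmod (err T k f w)) (W d (Suc n))
      = L2_set (\<lambda>(w, i). cmod (err T k f (w @ [i]))) (W d n \<times> {..<d})"
    by (rule L2_W_Suc)
  also have "\<dots> \<le> L2_set (\<lambda>p. (\<lambda>(w, i). cmod (err T k (R i) w)) p + (\<lambda>(w, i). cmod (DD i f w)) p) (W d n \<times> {..<d})"
    by (rule L2_set_mono) (auto simp: key norm_triangle_ineq4)
  also have "\<dots> \<le> L2_set (\<lambda>(w, i). cmod (err T k (R i) w)) (W d n \<times> {..<d}) + L2_set (\<lambda>(w, i). cmod (DD i f w)) (W d n \<times> {..<d})"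
    by (rule L2_set_triangle_ineq)
  also have "L2_set (\<lambda>(w, i). cmod (err T k (R i) w)) (W d n \<times> {..<d}) \<le> Sj d T k j * fnorm f"
  proof -
    have "L2_set (\<lambda>(w, i). cmod (err T k (R i) w)) (W d n \<times> {..<d})
        = L2_set (\<lambda>i. L2_set (\<lambda>w. cmod (err T k (R i) w)) (W d n)) {..<d}"
      by (simp add: L2_set_prod[OF finite_W])
    also have "\<dots> \<le> L2_set (\<lambda>i. Sj d T k j * fnorm (R i)) {..<d}"
      by (rule L2_set_mono) (use Suc.IH Rf in \<open>auto simp: n_def L2_set_nonneg\<close>)
    also have "\<dots> = Sj d T k j * L2_set (\<lambda>i. fnorm (R i)) {..<d}"
      by (rule L2_set_right_distrib[OF S0, symmetric])
    also have "L2_set (\<lambda>i. fnorm (R i)) {..<d} = fnorm f"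
    proof -
      have "L2_set (\<lambda>i. fnorm (R i)) {..<d} = L2_set (\<lambda>i. L2_set (\<lambda>w. cmod (f (w @ [i]))) (W d n)) {..<d}"
        by (simp add: fR)
      also have "\<dots> = L2_set (\<lambda>(w, i). cmod (f (w @ [i]))) (W d n \<times> {..<d})"
        by (simp add: L2_set_prod[OF finite_W])
      also have "\<dots> = L2_set (\<lambda>w. cmod (f w)) (W d (Suc n))"
        by (rule L2_W_Suc[symmetric])
      finally show ?thesis using ff by simp
    qed
    finally show ?thesis .
  qed
  also have "L2_set (\<lambda>(w, i). cmod (DD i f w)) (W d n \<times> {..<d}) \<le> rho d T (Suc n) * fnorm f"
  proof -
    have "L2_set (\<lambda>(w, i). cmod (DD i f w)) (W d n \<times> {..<d})
        = L2_set (\<lambda>i. L2_set (\<lambda>w. cmod (DD i f w)) (W d n)) {..<d}"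
      by (simp add: L2_set_prod[OF finite_W])
    also have "\<dots> \<le> L2_set (\<lambda>i. resnorm d (DD i) (Suc n) * fnorm f) {..<d}"
    proof (rule L2_set_mono)
      fix i assume i: "i \<in> {..<d}"
      have "L2_set (\<lambda>w. cmod (DD i f w)) (W d n) \<le> fnorm (DD i f)"
        by (rule L2_le_fnorm[OF bop_Fock[OF _ Fock_n_Fock[OF f]] finite_W]) (use D i in \<open>auto simp: DD_def\<close>)
      also have "\<dots> \<le> resnorm d (DD i) (Suc n) * fnorm f"
        by (rule resnorm_bound[OF _ f]) (use D i in \<open>auto simp: DD_def\<close>)
      finally show "L2_set (\<lambda>w. cmod (DD i f w)) (W d n) \<le> resnorm d (DD i) (Suc n) * fnorm f" .
    qed (simp add: L2_set_nonneg)
    also have "\<dots> \<le> (\<Sum>i<d. resnorm d (DD i) (Suc n) * fnorm f)"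
      by (rule L2_set_le_sum) (use D in \<open>auto simp: DD_def intro!: mult_nonneg_nonneg resnorm_nonneg fnorm_nonneg\<close>)
    also have "\<dots> = rho d T (Suc n) * fnorm f"
      unfolding rho_def DD_def by (simp add: sum_distrib_right)
    finally show ?thesis .
  qed
  finally have "L2_set (\<lambda>w. cmod (err T k f w)) (W d (Suc n)) \<le> (Sj d T k j + rho d T (Suc n)) * fnorm f"
    by (simp add: algebra_simps)
  then show ?case unfolding n_def Sj_def by simp
qed


definition dl :: "nat \<Rightarrow> op \<Rightarrow> nat \<Rightarrow> real" where
  "dl d T k = (\<Sum>m. rho d T (m + Suc k))"

lemma level_bound:
  assumes T: "bounded_op d T" "block_diagonal d T" and D: "\<forall>i<d. bounded_op d (commutator T (Rop_adj i))"
    and sr: "summable (rho d T)" and h: "h \<in> Fock_n d n"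
  shows "L2_set (\<lambda>w. cmod (T h w - Pk d T k h w)) (W d n) \<le> dl d T k * fnorm h"
proof -
  have sr': "summable (\<lambda>m. rho d T (m + Suc k))" using summable_iff_shift[of "rho d T" "Suc k"] sr by blast
  have dl0: "dl d T k \<ge> 0" unfolding dl_def by (rule suminf_nonneg[OF sr' rho_nonneg[OF D]])
  show ?thesis
  proof (cases "n < k")
    case True
    have "L2_set (\<lambda>w. cmod (T h w - Pk d T k h w)) (W d n) = 0"
      using P_low[OF T(1) h _ True] by (simp add: L2_set_eq_0_iff[OF finite_W])
    then show ?thesis using dl0 fnorm_nonneg[of h] by simp
  next
    case False
    define j where "j = n - k"
    have nj: "n = k + j" using False unfolding j_def by simp
    have "L2_set (\<lambda>w. cmod (T h w - Pk d T k h w)) (W d n) = L2_set (\<lambda>w. cmod (err T k h w)) (W d (k + j))"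
      unfolding nj by (rule L2_set_cong) (use P_high[OF T(1) h] nj in \<open>auto simp: err_def\<close>)
    also have "\<dots> \<le> Sj d T k j * fnorm h" by (rule err_bound[OF T(1) D]) (use h nj in simp)
    also have "\<dots> \<le> dl d T k * fnorm h"
    proof (rule mult_right_mono[OF _ fnorm_nonneg])
      have "Sj d T k j = (\<Sum>m<j. rho d T (m + Suc k))" unfolding Sj_def by (simp add: add.commute)
      also have "\<dots> \<le> dl d T k" unfolding dl_def
        by (rule sum_le_suminf[OF sr']) (auto intro: rho_nonneg[OF D])
      finally show "Sj d T k j \<le> dl d T k" .
    qed
    finally show ?thesis .
  qed
qed

lemma global_bound:
  assumes T: "bounded_op d T" "block_diagonal d T" and D: "\<forall>i<d. bounded_op d (commutator T (Rop_adj i))"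
    and sr: "summable (rho d T)" and f: "f \<in> Fock d"
  shows "fnorm (op_diff T (Pk d T k) f) \<le> dl d T k * fnorm f"
proof -
  define g where "g = op_diff T (Pk d T k) f"
  define \<delta> where "\<delta> = dl d T k"
  have sr': "summable (\<lambda>m. rho d T (m + Suc k))" using summable_iff_shift[of "rho d T" "Suc k"] sr by blast
  have d0: "\<delta> \<ge> 0" unfolding \<delta>_def dl_def by (rule suminf_nonneg[OF sr' rho_nonneg[OF D]])
  have gw: "g w = T (proj n f) w - Pk d T k (proj n f) w" if w: "w \<in> W d n" for w n
  proof -
    have ln: "length w = n" using w by (simp add: W_mem)
    have pF: "proj n f \<in> Fock d" using proj_Fock_n[OF f] by (rule Fock_n_Fock)
    have "Pk d T k f w = Pk d T k (proj n f) w"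
    proof (cases "n < k")
      case True
      show ?thesis unfolding Pk_eval_low[OF f w True] Pk_eval_low[OF pF w True]
        by (rule sum.cong) (auto simp: proj_def W_mem)
    next
      case False
      then have kn: "k \<le> n" by simp
      show ?thesis unfolding Pk_eval_high[OF f w kn] Pk_eval_high[OF pF w kn]
        by (rule sum.cong) (use ln kn in \<open>auto simp: proj_def W_mem\<close>)
    qed
    then show ?thesis unfolding g_def op_diff_def using block_eval[OF T f ln] by simp
  qed
  have gout: "g w = 0" if "w \<notin> words d" for w
    unfolding g_def op_diff_def using Pk_out[OF f that] Fock_zero_out[OF bop_Fock[OF T(1) f] that] by simp
  have lev: "(\<Sum>w\<in>W d n. (cmod (g w))\<^sup>2) \<le> \<delta>\<^sup>2 * (\<Sum>w\<in>W d n. (cmod (f w))\<^sup>2)" for n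
  proof -
    have p: "proj n f \<in> Fock_n d n" by (rule proj_Fock_n[OF f])
    have "L2_set (\<lambda>w. cmod (g w)) (W d n) = L2_set (\<lambda>w. cmod (T (proj n f) w - Pk d T k (proj n f) w)) (W d n)"
      by (rule L2_set_cong) (auto simp: gw)
    also have "\<dots> \<le> \<delta> * fnorm (proj n f)" unfolding \<delta>_def by (rule level_bound[OF T D sr p])
    also have "fnorm (proj n f) = L2_set (\<lambda>w. cmod (f w)) (W d n)"
      by (subst fnorm_finite_supp[OF finite_W Fock_n_out[OF p]]) (auto intro!: L2_set_cong simp: proj_def W_mem)
    finally have "L2_set (\<lambda>w. cmod (g w)) (W d n) \<le> \<delta> * L2_set (\<lambda>w. cmod (f w)) (W d n)" .
    then have "(L2_set (\<lambda>w. cmod (g w)) (W d n))\<^sup>2 \<le> (\<delta> * L2_set (\<lambda>w. cmod (f w)) (W d n))\<^sup>2"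
      by (rule power_mono) (simp add: L2_set_nonneg)
    then show ?thesis by (simp add: L2_set_def power_mult_distrib sum_nonneg)
  qed
  have sf: "(\<lambda>w. (cmod (f w))\<^sup>2) summable_on UNIV" using f unfolding Fock_def by auto
  have fin: "(\<Sum>w\<in>F. (cmod (g w))\<^sup>2) \<le> \<delta>\<^sup>2 * (fnorm f)\<^sup>2" if F: "finite F" for F
  proof -
    define N where "N = Max (insert 0 (length ` F))"
    have FN: "length w \<le> N" if "w \<in> F" for w
      unfolding N_def using F that by (intro Max_ge) auto
    define G where "G = (\<Union>n\<in>{..N}. W d n)"
    have fG: "finite G" unfolding G_def using finite_W by auto
    have dis: "\<forall>i\<in>{..N}. \<forall>j\<in>{..N}. i \<noteq> j \<longrightarrow> W d i \<inter> W d j = {}" by (auto simp: W_mem)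
    have "(\<Sum>w\<in>F. (cmod (g w))\<^sup>2) \<le> (\<Sum>w\<in>F \<union> G. (cmod (g w))\<^sup>2)"
      by (rule sum_mono2) (use F fG in auto)
    also have "\<dots> = (\<Sum>w\<in>G. (cmod (g w))\<^sup>2)"
    proof (rule sum.mono_neutral_right)
      show "\<forall>i\<in>F \<union> G - G. (cmod (g i))\<^sup>2 = 0"
      proof
        fix w assume w: "w \<in> F \<union> G - G"
        then have "w \<notin> words d" using FN unfolding G_def by (auto simp: W_mem words_def)
        then show "(cmod (g w))\<^sup>2 = 0" using gout by simp
      qed
    qed (use F fG in auto)
    also have "\<dots> = (\<Sum>n\<in>{..N}. \<Sum>w\<in>W d n. (cmod (g w))\<^sup>2)"
      unfolding G_def by (rule sum.UNION_disjoint) (use finite_W dis in auto)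
    also have "\<dots> \<le> (\<Sum>n\<in>{..N}. \<delta>\<^sup>2 * (\<Sum>w\<in>W d n. (cmod (f w))\<^sup>2))"
      by (rule sum_mono) (rule lev)
    also have "\<dots> = \<delta>\<^sup>2 * (\<Sum>w\<in>G. (cmod (f w))\<^sup>2)"
      unfolding G_def by (subst sum.UNION_disjoint) (use finite_W dis in \<open>auto simp: sum_distrib_left\<close>)
    also have "\<dots> \<le> \<delta>\<^sup>2 * (fnorm f)\<^sup>2"
    proof (rule mult_left_mono)
      have "(\<Sum>w\<in>G. (cmod (f w))\<^sup>2) \<le> (\<Sum>\<^sub>\<infinity>w. (cmod (f w))\<^sup>2)"
        by (rule finite_sum_le_infsum[OF sf fG]) auto
      then show "(\<Sum>w\<in>G. (cmod (f w))\<^sup>2) \<le> (fnorm f)\<^sup>2"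
        unfolding fnorm_def by (simp add: infsum_nonneg)
    qed simp
    finally show ?thesis .
  qed
  have "(\<Sum>\<^sub>\<infinity>w. (cmod (g w))\<^sup>2) \<le> \<delta>\<^sup>2 * (fnorm f)\<^sup>2"
  proof (cases "(\<lambda>w. (cmod (g w))\<^sup>2) summable_on UNIV")
    case True
    show ?thesis by (rule infsum_le_finite_sums[OF True]) (use fin in auto)
  next
    case False
    then show ?thesis by (simp add: infsum_not_exists)
  qed
  then have "fnorm g \<le> sqrt ((\<delta> * fnorm f)\<^sup>2)" unfolding fnorm_def by (simp add: power_mult_distrib)
  also have "\<dots> = \<delta> * fnorm f" using d0 fnorm_nonneg[of f] by simp
  finally show ?thesis unfolding g_def \<delta>_def .
qed

theorem corollary3p6:
  fixes d :: nat and T :: op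
  assumes "d \<ge> 2"
    and "bounded_op d T"
    and "block_diagonal d T"
    and "\<forall>i<d. commutator T (Rop_adj i) \<in> classS d"
  shows "T \<in> CstarL d"
proof -
  have D: "\<forall>i<d. bounded_op d (commutator T (Rop_adj i))" using assms(4) unfolding classS_def by auto
  have sr: "summable (rho d T)" unfolding rho_def
    by (rule summable_sum) (use assms(4) in \<open>auto simp: classS_def\<close>)
  have "\<exists>P\<in>star_alg_L d. opnorm d (op_diff T P) < e" if e: "e > 0" for e
  proof -
    obtain N where N: "\<forall>n\<ge>N. norm (\<Sum>i. rho d T (i + n)) < e"
      using suminf_exist_split[OF e sr] by blast
    have "norm (\<Sum>i. rho d T (i + Suc N)) < e" by (rule N[rule_format]) simp
    moreover have "dl d T N \<le> norm (\<Sum>i. rho d T (i + Suc N))" unfolding dl_def by simp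
    ultimately have dlt: "dl d T N < e" by linarith
    have "opnorm d (op_diff T (Pk d T N)) \<le> dl d T N"
      unfolding opnorm_def
    proof (rule cSup_least)
      show "{fnorm (op_diff T (Pk d T N) f) |f. f \<in> Fock d \<and> fnorm f \<le> 1} \<noteq> {}"
        using zero_Fock fnorm_zero by fastforce
    next
      fix x assume "x \<in> {fnorm (op_diff T (Pk d T N) f) |f. f \<in> Fock d \<and> fnorm f \<le> 1}"
      then obtain f where f: "f \<in> Fock d" "fnorm f \<le> 1" and x: "x = fnorm (op_diff T (Pk d T N) f)" by blast
      have "x \<le> dl d T N * fnorm f" unfolding x by (rule global_bound[OF assms(2,3) D sr f(1)])
      also have "\<dots> \<le> dl d T N"
      proof -
        have "summable (\<lambda>m. rho d T (m + Suc N))" using summable_iff_shift[of "rho d T" "Suc N"] sr by blast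
        then have "dl d T N \<ge> 0" unfolding dl_def by (rule suminf_nonneg) (rule rho_nonneg[OF D])
        then show ?thesis using f(2) by (simp add: mult_left_le)
      qed
      finally show "x \<le> dl d T N" .
    qed
    moreover have "Pk d T N \<in> star_alg_L d" by (rule Pk_alg) (use assms(1) in simp)
    ultimately show ?thesis using dlt by force
  qed
  then show ?thesis unfolding CstarL_def using assms(2) by blast
qed

end
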